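(* Let $n\ge 2$ and $q\ge 0$ be real. Let $A\in M_n(\mathbb{C})$ be normal and $B\in M_n(\mathbb{C})$ arbitrary. Then $$\|AB-qBA\|_F^2\le (1+q^2)\,\|A\|_{(2),2}^2\,\|B\|_F^2 .$$ The bound is sharp: equality holds for $A=\operatorname{diag}(1,-q,0,\dots,0)$ and $B$ the matrix whose only nonzero entry is $b_{12}=1$.
   Context: $\|X\|_F=\sqrt{\operatorname{tr}(XX^\dagger)}$ is the Frobenius norm. For $X\in M_n(\mathbb{C})$ with singular values $s_1\ge s_2\ge\cdots\ge s_n$, the Ky Fan $(2),2$ norm is $\|X\|_{(2),2}=\sqrt{s_1^2+s_2^2}$. *)

theory Defs
  imports "Jordan_Normal_Form.Schur_Decomposition" "Jordan_Normal_Form.Char_Poly"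
begin

definition mat_trace :: "complex mat \<Rightarrow> complex" where
  "mat_trace X = (\<Sum>i<dim_row X. X $$ (i, i))"

(* Frobenius norm: ||X||_F = sqrt(tr(X X^dagger)); the trace is real and nonnegative. *)
definition frob_norm :: "complex mat \<Rightarrow> real" where
  "frob_norm X = sqrt (Re (mat_trace (X * mat_adjoint X)))"

definition normal_mat :: "complex mat \<Rightarrow> bool" where
  "normal_mat A \<longleftrightarrow> A * mat_adjoint A = mat_adjoint A * A"

(* Singular values of a square matrix X, in non-increasing order, with multiplicity:
   the square roots of the eigenvalues (roots of the characteristic polynomial,
   counted with multiplicity) of X^dagger X, which are real and nonnegative. *)
definition singular_values :: "complex mat \<Rightarrow> real list" where
  "singular_values X =
     map sqrt (rev (sorted_list_of_multiset
       (image_mset Re (proots (char_poly (mat_adjoint X * X))))))"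

definition kyfan22_norm :: "complex mat \<Rightarrow> real" where
  "kyfan22_norm X = sqrt ((singular_values X ! 0)\<^sup>2 + (singular_values X ! 1)\<^sup>2)"

end

theory Submission
  imports Defs
begin

lemma adj_dim[simp]: "dim_row (mat_adjoint A) = dim_col A" "dim_col (mat_adjoint A) = dim_row A"
  by (simp_all add: mat_adjoint_def)

lemma adj_index[simp]: "i < dim_col A \<Longrightarrow> j < dim_row A \<Longrightarrow> mat_adjoint (A::complex mat) $$ (i,j) = cnj (A$$(j,i))"
  by (simp add: mat_adjoint_def mat_of_rows_def)

lemma adj_adj[simp]: "mat_adjoint (mat_adjoint (A::complex mat)) = A"
proof (rule eq_matI)
  fix i j assume "i < dim_row A" "j < dim_col A"
  thus "mat_adjoint (mat_adjoint A) $$ (i, j) = A $$ (i, j)" by simp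
qed simp_all

lemma adj_carrier[simp]: "A \<in> carrier_mat n m \<Longrightarrow> mat_adjoint A \<in> carrier_mat m n"
  unfolding carrier_mat_def by simp

lemma adj_mult: assumes "(A::complex mat) \<in> carrier_mat n m" "B \<in> carrier_mat m k"
  shows "mat_adjoint (A*B) = mat_adjoint B * mat_adjoint A"
proof (rule eq_matI)
  have d: "dim_row A = n" "dim_col A = m" "dim_row B = m" "dim_col B = k" using assms by auto
  fix i j assume ij: "i < dim_row (mat_adjoint B * mat_adjoint A)" "j < dim_col (mat_adjoint B * mat_adjoint A)"
  hence i: "i < k" and j: "j < n" using d by auto
  have "mat_adjoint (A*B) $$ (i,j) = cnj (row A j \<bullet> col B i)"
    using i j d by simp
  also have "\<dots> = cnj (\<Sum>l\<in>{0..<m}. A $$ (j,l) * B $$ (l,i))"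
    unfolding scalar_prod_def using i j d by (intro arg_cong[where f=cnj] sum.cong) auto
  also have "\<dots> = (\<Sum>l\<in>{0..<m}. cnj (B $$ (l,i)) * cnj (A $$ (j,l)))"
    by (simp add: cnj_sum mult.commute)
  also have "\<dots> = row (mat_adjoint B) i \<bullet> col (mat_adjoint A) j"
    unfolding scalar_prod_def using i j d by (intro sum.cong) auto
  also have "\<dots> = (mat_adjoint B * mat_adjoint A) $$ (i,j)"
    using i j d by simp
  finally show "mat_adjoint (A*B) $$ (i,j) = (mat_adjoint B * mat_adjoint A) $$ (i,j)" .
next
  show "dim_row (mat_adjoint (A * B)) = dim_row (mat_adjoint B * mat_adjoint A)" by simp
  show "dim_col (mat_adjoint (A * B)) = dim_col (mat_adjoint B * mat_adjoint A)" by simp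
qed

lemma adj_one[simp]: "mat_adjoint (1\<^sub>m n :: complex mat) = 1\<^sub>m n"
proof (rule eq_matI)
  fix i j assume "i < dim_row (1\<^sub>m n :: complex mat)" "j < dim_col (1\<^sub>m n :: complex mat)"
  thus "mat_adjoint (1\<^sub>m n :: complex mat) $$ (i,j) = 1\<^sub>m n $$ (i,j)" by simp
qed simp_all

lemma adj_minus: assumes "(A::complex mat) \<in> carrier_mat n m" "B \<in> carrier_mat n m"
  shows "mat_adjoint (A - B) = mat_adjoint A - mat_adjoint B"
proof (rule eq_matI)
  fix i j assume "i < dim_row (mat_adjoint A - mat_adjoint B)" "j < dim_col (mat_adjoint A - mat_adjoint B)"
  thus "mat_adjoint (A - B) $$ (i,j) = (mat_adjoint A - mat_adjoint B) $$ (i,j)" using assms by simp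
qed (use assms in simp_all)

lemma adj_smult_real: "mat_adjoint (complex_of_real r \<cdot>\<^sub>m (A::complex mat)) = complex_of_real r \<cdot>\<^sub>m mat_adjoint A"
proof (rule eq_matI)
  fix i j assume "i < dim_row (complex_of_real r \<cdot>\<^sub>m mat_adjoint A)" "j < dim_col (complex_of_real r \<cdot>\<^sub>m mat_adjoint A)"
  thus "mat_adjoint (complex_of_real r \<cdot>\<^sub>m A) $$ (i,j) = (complex_of_real r \<cdot>\<^sub>m mat_adjoint A) $$ (i,j)" by simp
qed simp_all


definition diagm :: "nat \<Rightarrow> (nat \<Rightarrow> complex) \<Rightarrow> complex mat" where
  "diagm n d = mat n n (\<lambda>(i,j). if i = j then d i else 0)"

lemma diagm_carrier[simp]: "diagm n d \<in> carrier_mat n n"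
  and diagm_dim[simp]: "dim_row (diagm n d) = n" "dim_col (diagm n d) = n"
  by (auto simp: diagm_def)

lemma diagm_index[simp]: "i < n \<Longrightarrow> j < n \<Longrightarrow> diagm n d $$ (i,j) = (if i = j then d i else 0)"
  by (simp add: diagm_def)

lemma diagm_mult_left: assumes "X \<in> carrier_mat n m" "i < n" "j < m"
  shows "(diagm n d * X) $$ (i,j) = d i * X $$ (i,j)"
proof -
  have d: "dim_row X = n" "dim_col X = m" using assms by auto
  have "(diagm n d * X) $$ (i,j) = row (diagm n d) i \<bullet> col X j" using assms d by simp
  also have "\<dots> = (\<Sum>k\<in>{0..<n}. (if k = i then d i * X $$ (k,j) else 0))"
    unfolding scalar_prod_def using assms d by (intro sum.cong) auto
  also have "\<dots> = d i * X $$ (i,j)" using assms by simp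
  finally show ?thesis .
qed

lemma diagm_mult_right: assumes "X \<in> carrier_mat m n" "i < m" "j < n"
  shows "(X * diagm n d) $$ (i,j) = X $$ (i,j) * d j"
proof -
  have d: "dim_row X = m" "dim_col X = n" using assms by auto
  have "(X * diagm n d) $$ (i,j) = row X i \<bullet> col (diagm n d) j" using assms d by simp
  also have "\<dots> = (\<Sum>k\<in>{0..<n}. (if k = j then X $$ (i,k) * d j else 0))"
    unfolding scalar_prod_def using assms d by (intro sum.cong) auto
  also have "\<dots> = X $$ (i,j) * d j" using assms by simp
  finally show ?thesis .
qed

lemma adj_diagm: "mat_adjoint (diagm n d) = diagm n (\<lambda>i. cnj (d i))"
proof (rule eq_matI)
  fix i j assume "i < dim_row (diagm n (\<lambda>i. cnj (d i)))" "j < dim_col (diagm n (\<lambda>i. cnj (d i)))"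
  thus "mat_adjoint (diagm n d) $$ (i,j) = diagm n (\<lambda>i. cnj (d i)) $$ (i,j)" by simp
qed simp_all

lemma diagm_mult: "diagm n d * diagm n e = diagm n (\<lambda>i. d i * e i)"
proof (rule eq_matI)
  fix i j assume "i < dim_row (diagm n (\<lambda>i. d i * e i))" "j < dim_col (diagm n (\<lambda>i. d i * e i))"
  hence ij: "i < n" "j < n" by simp_all
  show "(diagm n d * diagm n e) $$ (i,j) = diagm n (\<lambda>i. d i * e i) $$ (i,j)"
    using diagm_mult_left[OF diagm_carrier ij, of d e] ij by simp
qed simp_all

lemma trace_comm: assumes "(A::complex mat) \<in> carrier_mat n m" "B \<in> carrier_mat m n"
  shows "mat_trace (A * B) = mat_trace (B * A)"
proof -
  have d: "dim_row A = n" "dim_col A = m" "dim_row B = m" "dim_col B = n" using assms by auto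
  have "mat_trace (A * B) = (\<Sum>i<n. row A i \<bullet> col B i)"
    unfolding mat_trace_def using d by (intro sum.cong) auto
  also have "\<dots> = (\<Sum>i<n. \<Sum>k\<in>{0..<m}. A $$ (i,k) * B $$ (k,i))"
    unfolding scalar_prod_def using d by (intro sum.cong) auto
  also have "\<dots> = (\<Sum>k\<in>{0..<m}. \<Sum>i<n. A $$ (i,k) * B $$ (k,i))" by (rule sum.swap)
  also have "\<dots> = (\<Sum>k<m. \<Sum>i\<in>{0..<n}. B $$ (k,i) * A $$ (i,k))"
    by (simp add: atLeast0LessThan mult.commute)
  also have "\<dots> = (\<Sum>k<m. row B k \<bullet> col A k)"
    unfolding scalar_prod_def using d by (intro sum.cong) auto
  also have "\<dots> = mat_trace (B * A)"
    unfolding mat_trace_def using d by (intro sum.cong) auto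
  finally show ?thesis .
qed

lemma frob_sq: "(frob_norm X)\<^sup>2 = (\<Sum>i<dim_row X. \<Sum>j<dim_col X. (cmod (X $$ (i,j)))\<^sup>2)"
proof -
  have "mat_trace (X * mat_adjoint X) = (\<Sum>i<dim_row X. row X i \<bullet> col (mat_adjoint X) i)"
    unfolding mat_trace_def by (intro sum.cong) auto
  also have "\<dots> = (\<Sum>i<dim_row X. \<Sum>j<dim_col X. X $$ (i,j) * cnj (X $$ (i,j)))"
    unfolding scalar_prod_def atLeast0LessThan by (intro sum.cong) auto
  also have "\<dots> = complex_of_real (\<Sum>i<dim_row X. \<Sum>j<dim_col X. (cmod (X $$ (i,j)))\<^sup>2)"
    by (simp only: complex_norm_square of_real_sum)
  finally have "Re (mat_trace (X * mat_adjoint X)) = (\<Sum>i<dim_row X. \<Sum>j<dim_col X. (cmod (X $$ (i,j)))\<^sup>2)"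
    by simp
  moreover have "0 \<le> (\<Sum>i<dim_row X. \<Sum>j<dim_col X. (cmod (X $$ (i,j)))\<^sup>2)"
    by (intro sum_nonneg) auto
  ultimately show ?thesis by (simp add: frob_norm_def)
qed


lemma revsort_anti: fixes xs :: "real list"
  assumes "a \<le> b" "b < length xs"
  shows "rev (sort xs) ! b \<le> rev (sort xs) ! a"
proof -
  have s: "sorted (sort xs)" by simp
  have l: "length (sort xs) = length xs" by simp
  have "rev (sort xs) ! b = sort xs ! (length xs - Suc b)" using assms by (simp add: rev_nth)
  moreover have "rev (sort xs) ! a = sort xs ! (length xs - Suc a)" using assms by (simp add: rev_nth)
  moreover have "sort xs ! (length xs - Suc b) \<le> sort xs ! (length xs - Suc a)"
    by (rule sorted_nth_mono[OF s]) (use assms in auto)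
  ultimately show ?thesis by simp
qed

lemma top2_upper: fixes xs :: "real list"
  assumes "i < length xs" "j < length xs" "i \<noteq> j"
  shows "xs ! i + xs ! j \<le> rev (sort xs) ! 0 + rev (sort xs) ! 1"
proof -
  let ?L = "rev (sort xs)"
  have m: "mset xs = mset ?L" by simp
  obtain p where p: "p permutes {..<length ?L}" "permute_list p ?L = xs"
    using mset_eq_permutation[OF m] by blast
  have lL: "length ?L = length xs" by simp
  have xi: "xs ! i = ?L ! p i" using p assms lL by (metis permute_list_nth)
  have xj: "xs ! j = ?L ! p j" using p assms lL by (metis permute_list_nth)
  have pi: "p i < length xs" "p j < length xs" using p assms lL
    by (metis lessThan_iff permutes_in_image)+
  have pij: "p i \<noteq> p j" using p assms by (metis permutes_inj injD)
  show ?thesis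
  proof (cases "p i < p j")
    case True
    have "?L ! p i \<le> ?L ! 0" by (rule revsort_anti) (use pi in auto)
    moreover have "?L ! p j \<le> ?L ! 1" by (rule revsort_anti) (use pi True in auto)
    ultimately show ?thesis using xi xj by simp
  next
    case False
    hence F: "p j < p i" using pij by simp
    have "?L ! p j \<le> ?L ! 0" by (rule revsort_anti) (use pi in auto)
    moreover have "?L ! p i \<le> ?L ! 1" by (rule revsort_anti) (use pi F in auto)
    ultimately show ?thesis using xi xj by simp
  qed
qed

lemma top2_attained: fixes xs :: "real list"
  assumes "2 \<le> length xs"
  shows "\<exists>i j. i < length xs \<and> j < length xs \<and> i \<noteq> j \<and> rev (sort xs) ! 0 + rev (sort xs) ! 1 = xs ! i + xs ! j"
proof -
  let ?L = "rev (sort xs)"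
  have m: "mset ?L = mset xs" by simp
  obtain p where p: "p permutes {..<length xs}" "permute_list p xs = ?L"
    using mset_eq_permutation[OF m] by blast
  have "?L ! 0 = xs ! p 0" using p assms by (metis permute_list_nth length_permute_list less_le_trans pos2)
  moreover have "?L ! 1 = xs ! p 1" using p assms
    by (metis permute_list_nth One_nat_def Suc_1 Suc_le_lessD)
  moreover have "p 0 < length xs" "p 1 < length xs" using p assms
    by (metis lessThan_iff permutes_in_image less_le_trans pos2 One_nat_def Suc_1 Suc_le_lessD)+
  moreover have "p 0 \<noteq> p 1" using p by (metis permutes_inj injD zero_neq_one)
  ultimately show ?thesis by metis
qed

lemma proots_lin_prod: "proots (\<Prod>a\<leftarrow>xs. [:- a, 1:]) = mset (xs :: complex list)"
proof (induction xs)
  case Nil thus ?case by simp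
next
  case (Cons a xs)
  define P where "P = (\<Prod>a\<leftarrow>xs. [:- a, 1:])"
  have nz: "P \<noteq> 0" unfolding P_def by (auto simp: prod_list_zero_iff)
  have e: "(\<Prod>a\<leftarrow>a#xs. [:- a, 1:]) = [:- a, 1:] * P" unfolding P_def by simp
  have "proots ([:- a, 1:] * P) = proots [:- a, 1:] + proots P"
    by (rule proots_mult) (use nz in auto)
  moreover have "proots [:- a, 1:] = {#a#}" using proots_linear_factor[of "-a"] by simp
  ultimately show ?case using Cons unfolding e P_def by simp
qed


definition unitary :: "complex mat \<Rightarrow> nat \<Rightarrow> bool" where
  "unitary U n \<longleftrightarrow> U \<in> carrier_mat n n \<and> mat_adjoint U * U = 1\<^sub>m n \<and> U * mat_adjoint U = 1\<^sub>m n"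

lemma unitary_one: "unitary (1\<^sub>m n) n"
  by (simp add: unitary_def)

lemma frob_unitary: assumes U: "unitary U n" and X: "X \<in> carrier_mat n n"
  shows "frob_norm (U * X * mat_adjoint U) = frob_norm X"
proof -
  have Uc: "U \<in> carrier_mat n n" and UU: "mat_adjoint U * U = 1\<^sub>m n" using U unfolding unitary_def by auto
  have Ua: "mat_adjoint U \<in> carrier_mat n n" using Uc by simp
  have Xa: "mat_adjoint X \<in> carrier_mat n n" using X by simp
  note as = assoc_mult_mat[of _ n n _ n _ n]
  have mc[simp]: "A * B \<in> carrier_mat n n" if "A \<in> carrier_mat n n" "B \<in> carrier_mat n n" for A B :: "complex mat"
    using that by simp
  have adjY: "mat_adjoint (U * X * mat_adjoint U) = U * mat_adjoint X * mat_adjoint U"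
  proof -
    have "mat_adjoint (U * X * mat_adjoint U) = mat_adjoint (mat_adjoint U) * mat_adjoint (U * X)"
      by (rule adj_mult[of "U * X" n n "mat_adjoint U" n]) (use Uc X Ua in auto)
    also have "mat_adjoint (U * X) = mat_adjoint X * mat_adjoint U"
      by (rule adj_mult[of U n n X n]) (use Uc X in auto)
    also have "mat_adjoint (mat_adjoint U) = U" by (rule adj_adj)
    finally show ?thesis using Uc Xa Ua by (simp add: as)
  qed
  have cancel: "mat_adjoint U * (U * Z) = Z" if "Z \<in> carrier_mat n n" for Z
    using that Uc Ua UU by (simp add: as[symmetric])
  define Z where "Z = X * mat_adjoint X"
  have Zc: "Z \<in> carrier_mat n n" unfolding Z_def using X Xa by simp
  have eq1: "(U * X * mat_adjoint U) * mat_adjoint (U * X * mat_adjoint U) = U * (Z * mat_adjoint U)"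
    unfolding adjY Z_def using Uc X Ua Xa by (simp add: as cancel)
  have "mat_trace ((U * X * mat_adjoint U) * mat_adjoint (U * X * mat_adjoint U)) = mat_trace (U * (Z * mat_adjoint U))"
    by (simp only: eq1)
  also have "\<dots> = mat_trace ((Z * mat_adjoint U) * U)"
    by (rule trace_comm[of U n n]) (use Uc Zc Ua in auto)
  also have "\<dots> = mat_trace Z"
    using Uc Zc Ua UU by (simp add: as)
  finally show ?thesis unfolding frob_norm_def Z_def by simp
qed


lemma mult_nn[simp]: "A \<in> carrier_mat n n \<Longrightarrow> B \<in> carrier_mat n n \<Longrightarrow> A * B \<in> carrier_mat n n"
  by simp

lemma unitary_conj_adj: assumes U: "unitary U n" and X: "X \<in> carrier_mat n n"
  shows "mat_adjoint (U * X * mat_adjoint U) = U * mat_adjoint X * mat_adjoint U"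
proof -
  have Uc: "U \<in> carrier_mat n n" using U unfolding unitary_def by auto
  have Ua: "mat_adjoint U \<in> carrier_mat n n" using Uc by simp
  have Xa: "mat_adjoint X \<in> carrier_mat n n" using X by simp
  have "mat_adjoint (U * X * mat_adjoint U) = mat_adjoint (mat_adjoint U) * mat_adjoint (U * X)"
    by (rule adj_mult[of "U * X" n n "mat_adjoint U" n]) (use Uc X Ua in auto)
  also have "mat_adjoint (U * X) = mat_adjoint X * mat_adjoint U"
    by (rule adj_mult[of U n n X n]) (use Uc X in auto)
  also have "mat_adjoint (mat_adjoint U) = U" by (rule adj_adj)
  finally show ?thesis using Uc Xa Ua by (simp add: assoc_mult_mat[of _ n n _ n _ n])
qed

lemma unitary_conj_mult: assumes U: "unitary U n" and X: "X \<in> carrier_mat n n" and Y: "Y \<in> carrier_mat n n"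
  shows "(U * X * mat_adjoint U) * (U * Y * mat_adjoint U) = U * (X * Y) * mat_adjoint U"
proof -
  have Uc: "U \<in> carrier_mat n n" and UU: "mat_adjoint U * U = 1\<^sub>m n" using U unfolding unitary_def by auto
  have Ua: "mat_adjoint U \<in> carrier_mat n n" using Uc by simp
  note as = assoc_mult_mat[of _ n n _ n _ n]
  have cancel: "mat_adjoint U * (U * Z) = Z" if "Z \<in> carrier_mat n n" for Z
    using that Uc Ua UU by (simp add: as[symmetric])
  show ?thesis using Uc Ua X Y by (simp add: as cancel)
qed

lemma Re_of_real_sq[simp]: "Re ((complex_of_real r)\<^sup>2) = r\<^sup>2"
  by (simp add: power2_eq_square)

lemma kyfan_diag: assumes U: "unitary U n" and n: "2 \<le> n" and A: "A = U * diagm n d * mat_adjoint U"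
  shows "(kyfan22_norm A)\<^sup>2 = rev (sort (map (\<lambda>i. (cmod (d i))\<^sup>2) [0..<n])) ! 0
                             + rev (sort (map (\<lambda>i. (cmod (d i))\<^sup>2) [0..<n])) ! 1"
proof -
  have Uc: "U \<in> carrier_mat n n" and UU: "mat_adjoint U * U = 1\<^sub>m n" and UU': "U * mat_adjoint U = 1\<^sub>m n"
    using U unfolding unitary_def by auto
  have Ua: "mat_adjoint U \<in> carrier_mat n n" using Uc by simp
  define e where "e = (\<lambda>i. cnj (d i) * d i)"
  define xs where "xs = map (\<lambda>i. (cmod (d i))\<^sup>2) [0..<n]"
  define L where "L = rev (sort xs)"
  have AhA: "mat_adjoint A * A = U * diagm n e * mat_adjoint U"
    unfolding A unitary_conj_adj[OF U diagm_carrier] adj_diagm unitary_conj_mult[OF U diagm_carrier diagm_carrier]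
      diagm_mult e_def by simp
  have "similar_mat_wit (mat_adjoint A * A) (diagm n e) U (mat_adjoint U)"
    unfolding similar_mat_wit_def Let_def AhA using Uc Ua UU UU' by auto
  hence "similar_mat (mat_adjoint A * A) (diagm n e)" unfolding similar_mat_def by blast
  hence "char_poly (mat_adjoint A * A) = char_poly (diagm n e)" by (rule char_poly_similar)
  also have "\<dots> = (\<Prod>a\<leftarrow>diag_mat (diagm n e). [:- a, 1:])"
    by (rule char_poly_upper_triangular[of _ n]) (auto simp: upper_triangular_def)
  also have "diag_mat (diagm n e) = map e [0..<n]" unfolding diag_mat_def by simp
  finally have "proots (char_poly (mat_adjoint A * A)) = mset (map e [0..<n])"
    by (simp only: proots_lin_prod)
  hence "image_mset Re (proots (char_poly (mat_adjoint A * A))) = mset xs"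
    unfolding xs_def e_def by (simp add: mult.commute[of "cnj _"] complex_norm_square[symmetric] multiset.map_comp o_def)
  hence sv: "singular_values A = map sqrt L"
    unfolding singular_values_def L_def by simp
  have lL: "length L = n" unfolding L_def xs_def by simp
  have nonneg: "\<And>k. k < n \<Longrightarrow> 0 \<le> L ! k"
  proof -
    fix k assume "k < n"
    hence "L ! k \<in> set L" using lL by simp
    hence "L ! k \<in> set xs" unfolding L_def by simp
    thus "0 \<le> L ! k" unfolding xs_def by auto
  qed
  have s0: "(singular_values A ! 0)\<^sup>2 = L ! 0" unfolding sv using lL n nonneg[of 0] by simp
  have s1: "(singular_values A ! 1)\<^sup>2 = L ! 1" unfolding sv using lL n nonneg[of 1] by simp
  have "(kyfan22_norm A)\<^sup>2 = L ! 0 + L ! 1"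
    unfolding kyfan22_norm_def s0 s1 using nonneg[of 0] nonneg[of 1] n by simp
  thus ?thesis unfolding L_def xs_def .
qed


lemma conj_lin: assumes U: "U \<in> carrier_mat n n" and X: "X \<in> carrier_mat n n" and Y: "Y \<in> carrier_mat n n"
  shows "U * X * mat_adjoint U - r \<cdot>\<^sub>m (U * Y * mat_adjoint U) = U * (X - r \<cdot>\<^sub>m Y) * mat_adjoint U"
proof -
  have Ua: "mat_adjoint U \<in> carrier_mat n n" using U by simp
  have "U * (X - r \<cdot>\<^sub>m Y) = U * X - U * (r \<cdot>\<^sub>m Y)"
    by (rule mult_minus_distrib_mat[of _ n n]) (use U X Y in auto)
  also have "U * (r \<cdot>\<^sub>m Y) = r \<cdot>\<^sub>m (U * Y)" by (rule mult_smult_distrib[of _ n n]) (use U Y in auto)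
  finally have "U * (X - r \<cdot>\<^sub>m Y) * mat_adjoint U = (U * X - r \<cdot>\<^sub>m (U * Y)) * mat_adjoint U" by simp
  also have "\<dots> = U * X * mat_adjoint U - (r \<cdot>\<^sub>m (U * Y)) * mat_adjoint U"
    by (rule minus_mult_distrib_mat[of _ n n]) (use U X Y Ua in auto)
  also have "(r \<cdot>\<^sub>m (U * Y)) * mat_adjoint U = r \<cdot>\<^sub>m (U * Y * mat_adjoint U)"
    by (rule mult_smult_assoc_mat[of _ n n]) (use U Y Ua in auto)
  finally show ?thesis by simp
qed

lemma scalar_bound: fixes a b :: complex and q :: real assumes q: "0 \<le> q"
  shows "(cmod (a - complex_of_real q * b))\<^sup>2 \<le> (1 + q\<^sup>2) * ((cmod a)\<^sup>2 + (cmod b)\<^sup>2)"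
proof -
  have "cmod (a - complex_of_real q * b) \<le> cmod a + cmod (complex_of_real q * b)" by (rule norm_triangle_ineq4)
  also have "cmod (complex_of_real q * b) = q * cmod b" using q by (simp add: norm_mult)
  finally have t: "cmod (a - complex_of_real q * b) \<le> cmod a + q * cmod b" .
  have "(cmod (a - complex_of_real q * b))\<^sup>2 \<le> (cmod a + q * cmod b)\<^sup>2"
    by (rule power_mono[OF t]) simp
  moreover have "(1 + q\<^sup>2) * ((cmod a)\<^sup>2 + (cmod b)\<^sup>2) - (cmod a + q * cmod b)\<^sup>2 = (q * cmod a - cmod b)\<^sup>2"
    by (simp add: power2_eq_square algebra_simps)
  moreover have "0 \<le> (q * cmod a - cmod b)\<^sup>2" by simp
  ultimately show ?thesis by linarith
qed

lemma scalar_bound_diag: fixes a :: complex and q :: real assumes q: "0 \<le> q"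
  shows "(cmod (a - complex_of_real q * a))\<^sup>2 \<le> (1 + q\<^sup>2) * (cmod a)\<^sup>2"
proof -
  have e: "a - complex_of_real q * a = complex_of_real (1 - q) * a" by (simp add: algebra_simps)
  have "cmod (a - complex_of_real q * a) = \<bar>1 - q\<bar> * cmod a"
    unfolding e by (simp only: norm_mult norm_of_real)
  hence "(cmod (a - complex_of_real q * a))\<^sup>2 = (1 - q)\<^sup>2 * (cmod a)\<^sup>2"
    by (simp add: power_mult_distrib)
  moreover have "(1 - q)\<^sup>2 \<le> 1 + q\<^sup>2" using q by (simp add: power2_eq_square algebra_simps)
  ultimately show ?thesis by (simp add: mult_right_mono)
qed


lemma sum_single2: fixes c :: real and n a b :: nat assumes "a < n" "b < n"
  shows "(\<Sum>i<n. \<Sum>j<n. if i = a \<and> j = b then c else 0) = c"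
proof -
  have "(\<Sum>i<n. \<Sum>j<n. if i = a \<and> j = b then c else 0) = (\<Sum>i<n. if i = a then c else 0)"
  proof (intro sum.cong refl)
    fix i assume "i \<in> {..<n}"
    show "(\<Sum>j<n. if i = a \<and> j = b then c else 0) = (if i = a then c else 0)"
    proof (cases "i = a")
      case True
      have "(\<Sum>j<n. if i = a \<and> j = b then c else 0) = (\<Sum>j<n. if j = b then c else 0)"
        using True by simp
      also have "\<dots> = c" using assms sum.delta[of "{..<n}" b "\<lambda>_. c"] by simp
      finally show ?thesis using True by simp
    qed simp
  qed
  also have "\<dots> = c" using assms sum.delta[of "{..<n}" a "\<lambda>_. c"] by simp
  finally show ?thesis .
qed

lemma equality_case: assumes n: "2 \<le> n" and q: "0 \<le> q"
  shows "(let A0 = mat n n (\<lambda>(i, j). if i = 0 \<and> j = 0 then 1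
                                       else if i = 1 \<and> j = 1 then - complex_of_real q else 0);
              B0 = mat n n (\<lambda>(i, j). if i = 0 \<and> j = 1 then 1 else 0)
          in (frob_norm (A0 * B0 - complex_of_real q \<cdot>\<^sub>m (B0 * A0)))\<^sup>2
              = (1 + q\<^sup>2) * (kyfan22_norm A0)\<^sup>2 * (frob_norm B0)\<^sup>2)"
proof -
  define d0 where "d0 = (\<lambda>i::nat. if i = 0 then 1 else if i = 1 then - complex_of_real q else 0)"
  define A0 where "A0 = mat n n (\<lambda>(i, j). if i = 0 \<and> j = 0 then 1
                                       else if i = 1 \<and> j = 1 then - complex_of_real q else (0::complex))"
  define B0 where "B0 = mat n n (\<lambda>(i, j). if i = 0 \<and> j = 1 then 1 else (0::complex))"
  have Bc: "B0 \<in> carrier_mat n n" unfolding B0_def by simp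
  have AD: "A0 = diagm n d0"
  proof (rule eq_matI)
    fix i j assume "i < dim_row (diagm n d0)" "j < dim_col (diagm n d0)"
    thus "A0 $$ (i,j) = diagm n d0 $$ (i,j)" unfolding A0_def d0_def by auto
  qed (simp_all add: A0_def)
  have A1: "A0 = 1\<^sub>m n * diagm n d0 * mat_adjoint (1\<^sub>m n)" unfolding AD by simp
  define xs where "xs = map (\<lambda>i. (cmod (d0 i))\<^sup>2) [0..<n]"
  have kf: "(kyfan22_norm A0)\<^sup>2 = rev (sort xs) ! 0 + rev (sort xs) ! 1"
    unfolding xs_def by (rule kyfan_diag[OF unitary_one n A1])
  have lxs: "length xs = n" unfolding xs_def by simp
  have x0: "xs ! 0 = 1" and x1: "xs ! 1 = q\<^sup>2" unfolding xs_def d0_def using n by auto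
  have xk: "xs ! k = 0" if "2 \<le> k" "k < n" for k unfolding xs_def d0_def using that by auto
  have K: "rev (sort xs) ! 0 + rev (sort xs) ! 1 = 1 + q\<^sup>2"
  proof (rule antisym)
    obtain i j where ij: "i < n" "j < n" "i \<noteq> j" "rev (sort xs) ! 0 + rev (sort xs) ! 1 = xs ! i + xs ! j"
      using top2_attained[of xs] lxs n by auto
    have xle: "xs ! k \<le> 1 + q\<^sup>2" if "k < n" for k
      using that x0 x1 xk[of k] by (cases "k = 0"; cases "k = 1") auto
    have xnn: "xs ! k \<ge> 0" if "k < n" for k unfolding xs_def using that by simp
    have "xs ! i + xs ! j \<le> 1 + q\<^sup>2"
    proof (cases "i \<le> 1 \<and> j \<le> 1")
      case True
      hence "{i, j} = {0, 1}" using ij by auto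
      hence "xs ! i + xs ! j = xs ! 0 + xs ! 1" using ij(3) by (auto simp: doubleton_eq_iff)
      thus ?thesis using x0 x1 by simp
    next
      case False
      thus ?thesis
      proof (cases "2 \<le> i")
        case True thus ?thesis using xk[of i] xle[of j] ij by simp
      next
        case False
        hence "2 \<le> j" using \<open>\<not> (i \<le> 1 \<and> j \<le> 1)\<close> by auto
        thus ?thesis using xk[of j] xle[of i] ij by simp
      qed
    qed
    thus "rev (sort xs) ! 0 + rev (sort xs) ! 1 \<le> 1 + q\<^sup>2" using ij by simp
    show "1 + q\<^sup>2 \<le> rev (sort xs) ! 0 + rev (sort xs) ! 1"
      using top2_upper[of 0 xs 1] lxs n x0 x1 by simp
  qed
  have fB: "(frob_norm B0)\<^sup>2 = 1"
  proof -
    have "(frob_norm B0)\<^sup>2 = (\<Sum>i<n. \<Sum>j<n. (cmod (B0 $$ (i,j)))\<^sup>2)" using frob_sq[of B0] Bc by simp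
    also have "\<dots> = (\<Sum>i<n. \<Sum>j<n. if i = 0 \<and> j = 1 then 1 else 0)"
      by (intro sum.cong refl) (simp add: B0_def)
    also have "\<dots> = 1" by (rule sum_single2) (use n in auto)
    finally show ?thesis .
  qed
  define M where "M = A0 * B0 - complex_of_real q \<cdot>\<^sub>m (B0 * A0)"
  have Mc: "M \<in> carrier_mat n n" unfolding M_def AD using Bc by (simp add: minus_carrier_mat)
  have Mij: "M $$ (i,j) = (if i = 0 \<and> j = 1 then complex_of_real (1 + q\<^sup>2) else 0)" if "i < n" "j < n" for i j
  proof -
    have "(A0 * B0) $$ (i,j) = d0 i * B0 $$ (i,j)" unfolding AD by (rule diagm_mult_left[OF Bc that])
    moreover have "(B0 * A0) $$ (i,j) = B0 $$ (i,j) * d0 j" unfolding AD by (rule diagm_mult_right[OF Bc that])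
    ultimately have "M $$ (i,j) = d0 i * B0 $$ (i,j) - complex_of_real q * (B0 $$ (i,j) * d0 j)"
      unfolding M_def using that Bc AD by simp
    thus ?thesis using that unfolding B0_def d0_def by (auto simp: power2_eq_square)
  qed
  have fM: "(frob_norm M)\<^sup>2 = (1 + q\<^sup>2)\<^sup>2"
  proof -
    have hq: "cmod (complex_of_real (1 + q\<^sup>2)) = 1 + q\<^sup>2" by (simp only: norm_of_real) (simp add: add_nonneg_nonneg)
    have "(frob_norm M)\<^sup>2 = (\<Sum>i<n. \<Sum>j<n. (cmod (M $$ (i,j)))\<^sup>2)" using frob_sq[of M] Mc by simp
    also have "\<dots> = (\<Sum>i<n. \<Sum>j<n. if i = 0 \<and> j = 1 then (1 + q\<^sup>2)\<^sup>2 else 0)"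
      by (intro sum.cong refl) (simp add: Mij del: of_real_add of_real_power)
    also have "\<dots> = (1 + q\<^sup>2)\<^sup>2" by (rule sum_single2) (use n in auto)
    finally show ?thesis .
  qed
  show ?thesis unfolding Let_def A0_def[symmetric] B0_def[symmetric] M_def[symmetric]
    using fM fB kf K by (simp add: power2_eq_square)
qed


definition extd :: "complex \<Rightarrow> complex mat \<Rightarrow> complex mat" where
  "extd e X = mat (Suc (dim_row X)) (Suc (dim_col X))
     (\<lambda>(i,j). if i = 0 \<and> j = 0 then e else if i = 0 \<or> j = 0 then 0 else X $$ (i - 1, j - 1))"

lemma extd_dim[simp]: "dim_row (extd e X) = Suc (dim_row X)" "dim_col (extd e X) = Suc (dim_col X)"
  by (simp_all add: extd_def)

lemma extd_carrier[simp]: "X \<in> carrier_mat m m \<Longrightarrow> extd e X \<in> carrier_mat (Suc m) (Suc m)"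
  unfolding carrier_mat_def by simp

lemma extd_00[simp]: "extd e X $$ (0,0) = e"
  by (simp add: extd_def)
lemma extd_0S[simp]: "j < dim_col X \<Longrightarrow> extd e X $$ (0, Suc j) = 0"
  by (simp add: extd_def)
lemma extd_S0[simp]: "i < dim_row X \<Longrightarrow> extd e X $$ (Suc i, 0) = 0"
  by (simp add: extd_def)
lemma extd_SS[simp]: "i < dim_row X \<Longrightarrow> j < dim_col X \<Longrightarrow> extd e X $$ (Suc i, Suc j) = X $$ (i, j)"
  by (simp add: extd_def)

lemma extd_mult: assumes X: "X \<in> carrier_mat m m" and Y: "Y \<in> carrier_mat m m"
  shows "extd a X * extd b Y = extd (a * b) (X * Y)"
proof (rule eq_matI)
  have d: "dim_row X = m" "dim_col X = m" "dim_row Y = m" "dim_col Y = m" using X Y by auto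
  fix i j assume "i < dim_row (extd (a * b) (X * Y))" "j < dim_col (extd (a * b) (X * Y))"
  hence i: "i < Suc m" and j: "j < Suc m" using d by auto
  have "(extd a X * extd b Y) $$ (i,j) = (\<Sum>k\<in>{0..<Suc m}. extd a X $$ (i,k) * extd b Y $$ (k,j))"
    using i j d by (simp add: scalar_prod_def)
  also have "\<dots> = extd a X $$ (i,0) * extd b Y $$ (0,j) + (\<Sum>k\<in>{0..<m}. extd a X $$ (i,Suc k) * extd b Y $$ (Suc k,j))"
    by (simp only: sum.atLeast0_lessThan_Suc_shift comp_def)
  also have "\<dots> = extd (a * b) (X * Y) $$ (i,j)"
  proof (cases i)
    case 0 note i0 = this
    show ?thesis
    proof (cases j)
      case 0 thus ?thesis using i0 d by simp
    next
      case (Suc j') thus ?thesis using i0 d j by simp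
    qed
  next
    case (Suc i') note iS = this
    show ?thesis
    proof (cases j)
      case 0 thus ?thesis using iS d i by simp
    next
      case (Suc j')
      have "(X * Y) $$ (i', j') = (\<Sum>k\<in>{0..<m}. X $$ (i',k) * Y $$ (k,j'))"
        using iS Suc i j d by (simp add: scalar_prod_def)
      thus ?thesis using iS Suc d i j by simp
    qed
  qed
  finally show "(extd a X * extd b Y) $$ (i,j) = extd (a * b) (X * Y) $$ (i,j)" .
qed (use X Y in auto)

lemma extd_adj: "mat_adjoint (extd e X) = extd (cnj e) (mat_adjoint X)"
proof (rule eq_matI)
  fix i j assume "i < dim_row (extd (cnj e) (mat_adjoint X))" "j < dim_col (extd (cnj e) (mat_adjoint X))"
  hence i: "i < Suc (dim_col X)" and j: "j < Suc (dim_row X)" by auto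
  show "mat_adjoint (extd e X) $$ (i,j) = extd (cnj e) (mat_adjoint X) $$ (i,j)"
    using i j by (cases i; cases j) auto
qed auto

lemma extd_one: "extd 1 (1\<^sub>m m) = 1\<^sub>m (Suc m)"
proof (rule eq_matI)
  fix i j assume "i < dim_row (1\<^sub>m (Suc m) :: complex mat)" "j < dim_col (1\<^sub>m (Suc m) :: complex mat)"
  hence i: "i < Suc m" and j: "j < Suc m" by auto
  show "extd 1 (1\<^sub>m m) $$ (i,j) = 1\<^sub>m (Suc m) $$ (i,j)"
    using i j by (cases i; cases j) auto
qed auto

lemma extd_diagm: "extd e (diagm m d) = diagm (Suc m) (\<lambda>i. if i = 0 then e else d (i - 1))"
proof (rule eq_matI)
  fix i j assume "i < dim_row (diagm (Suc m) (\<lambda>i. if i = 0 then e else d (i - 1)))"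
    "j < dim_col (diagm (Suc m) (\<lambda>i. if i = 0 then e else d (i - 1)))"
  hence i: "i < Suc m" and j: "j < Suc m" by auto
  show "extd e (diagm m d) $$ (i,j) = diagm (Suc m) (\<lambda>i. if i = 0 then e else d (i - 1)) $$ (i,j)"
    using i j by (cases i; cases j) auto
qed auto

lemma extd_inj: assumes "extd a X = extd b Y" "X \<in> carrier_mat m m" "Y \<in> carrier_mat m m"
  shows "X = Y"
proof (rule eq_matI)
  fix i j assume "i < dim_row Y" "j < dim_col Y"
  hence ij: "i < m" "j < m" using assms by auto
  have d: "dim_row X = m" "dim_col X = m" "dim_row Y = m" "dim_col Y = m" using assms by auto
  have "extd a X $$ (Suc i, Suc j) = extd b Y $$ (Suc i, Suc j)" using assms(1) by simp
  thus "X $$ (i,j) = Y $$ (i,j)" using ij d by simp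
qed (use assms in auto)


lemma cscalar_self: fixes w :: "complex vec"
  shows "w \<bullet>c w = complex_of_real (\<Sum>k<dim_vec w. (cmod (w $ k))\<^sup>2)"
proof -
  have "w \<bullet>c w = (\<Sum>k\<in>{0..<dim_vec w}. w $ k * cnj (w $ k))"
    unfolding scalar_prod_def by simp
  also have "\<dots> = (\<Sum>k<dim_vec w. complex_of_real ((cmod (w $ k))\<^sup>2))"
    by (simp only: complex_norm_square atLeast0LessThan)
  finally show ?thesis by simp
qed

lemma exists_unitary_first_col: assumes v: "(v :: complex vec) \<in> carrier_vec n" and v0: "v \<noteq> 0\<^sub>v n"
  shows "\<exists>W c. unitary W n \<and> (\<forall>k<n. W $$ (k,0) = c * v $ k)"
proof -
  interpret cof_vec_space n "TYPE(complex)" .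
  define b where "b = basis_completion v"
  from basis_completion[OF v v0, folded b_def]
  have dist_b: "distinct b" and indep: "\<not> lin_dep (set b)" and bc: "set b \<subseteq> carrier_vec n" and hdb: "hd b = v"
    and len_b: "length b = n" by auto
  have n: "n \<noteq> 0" using v v0 by (metis carrier_vecD eq_vecI index_zero_vec(2) less_nat_zero_code)
  from hdb len_b n obtain vs where bv: "b = v # vs" by (cases b, auto)
  define ws where "ws = gram_schmidt n b"
  from gram_schmidt_result[OF bc dist_b indep refl, folded ws_def]
  have ws: "set ws \<subseteq> carrier_vec n" "corthogonal ws" "length ws = n"
    by (auto simp: len_b)
  from gram_schmidt_hd[OF v, of vs, folded bv] have hdws: "hd ws = v" unfolding ws_def .
  have ws0: "ws ! 0 = v" using hdws ws(3) n by (metis hd_conv_nth list.size(3))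
  have wsc: "ws ! i \<in> carrier_vec n" if "i < n" for i using ws that by (metis nth_mem subsetD)
  define s where "s = (\<lambda>i. \<Sum>k<n. (cmod (ws ! i $ k))\<^sup>2)"
  have ws_self: "ws ! i \<bullet>c ws ! i = complex_of_real (s i)" if "i < n" for i
    using cscalar_self[of "ws ! i"] wsc[OF that] unfolding s_def by simp
  have spos: "0 < s i" if "i < n" for i
  proof -
    have "ws ! i \<bullet>c ws ! i \<noteq> 0" using corthogonalD[OF ws(2), of i i] ws(3) that by simp
    hence "s i \<noteq> 0" using ws_self[OF that] by simp
    moreover have "0 \<le> s i" unfolding s_def by (intro sum_nonneg) auto
    ultimately show ?thesis by simp
  qed
  define c where "c = (\<lambda>i. complex_of_real (1 / sqrt (s i)))"
  define W where "W = mat n n (\<lambda>(k,i). c i * ws ! i $ k)"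
  have Wc: "W \<in> carrier_mat n n" unfolding W_def by simp
  have Wa: "mat_adjoint W \<in> carrier_mat n n" using Wc by simp
  have WW: "mat_adjoint W * W = 1\<^sub>m n"
  proof (rule eq_matI)
    fix i j assume "i < dim_row (1\<^sub>m n :: complex mat)" "j < dim_col (1\<^sub>m n :: complex mat)"
    hence i: "i < n" and j: "j < n" by auto
    have "(mat_adjoint W * W) $$ (i,j) = (\<Sum>k\<in>{0..<n}. cnj (W $$ (k,i)) * W $$ (k,j))"
      using i j Wc by (simp add: scalar_prod_def)
    also have "\<dots> = (\<Sum>k\<in>{0..<n}. (c i * c j) * (ws ! j $ k * cnj (ws ! i $ k)))"
      unfolding W_def c_def by (intro sum.cong refl) (use i j in auto)
    also have "\<dots> = (c i * c j) * (ws ! j \<bullet>c ws ! i)"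
      unfolding scalar_prod_def sum_distrib_left using wsc[OF i] wsc[OF j] by simp
    also have "\<dots> = 1\<^sub>m n $$ (i,j)"
    proof (cases "i = j")
      case True
      have "(c i * c j) * (ws ! j \<bullet>c ws ! i) = complex_of_real (1 / sqrt (s i) * (1 / sqrt (s i)) * s i)"
        unfolding True c_def ws_self[OF j] by (simp only: of_real_mult)
      also have "1 / sqrt (s i) * (1 / sqrt (s i)) * s i = 1" using spos[OF i]
        by (simp add: field_simps)
      finally show ?thesis using True i by simp
    next
      case False
      have "ws ! j \<bullet>c ws ! i = 0" using corthogonalD[OF ws(2), of j i] ws(3) i j False by simp
      thus ?thesis using False i j by simp
    qed
    finally show "(mat_adjoint W * W) $$ (i,j) = 1\<^sub>m n $$ (i,j)" .
  qed (use Wc in auto)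
  have WW': "W * mat_adjoint W = 1\<^sub>m n"
    by (rule mat_mult_left_right_inverse[OF Wa Wc WW])
  have "unitary W n" unfolding unitary_def using Wc WW WW' by simp
  moreover have "\<forall>k<n. W $$ (k,0) = c 0 * v $ k" unfolding W_def using ws0 n by simp
  ultimately show ?thesis by blast
qed


lemma unitary_mult: assumes "unitary U n" "unitary V n" shows "unitary (U * V) n"
proof -
  have U: "U \<in> carrier_mat n n" "mat_adjoint U * U = 1\<^sub>m n" "U * mat_adjoint U = 1\<^sub>m n"
    and V: "V \<in> carrier_mat n n" "mat_adjoint V * V = 1\<^sub>m n" "V * mat_adjoint V = 1\<^sub>m n"
    using assms unfolding unitary_def by auto
  have Ua: "mat_adjoint U \<in> carrier_mat n n" and Va: "mat_adjoint V \<in> carrier_mat n n" using U V by auto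
  note as = assoc_mult_mat[of _ n n _ n _ n]
  have adj: "mat_adjoint (U * V) = mat_adjoint V * mat_adjoint U" by (rule adj_mult[of U n n V n]) (use U V in auto)
  have "mat_adjoint (U * V) * (U * V) = mat_adjoint V * (mat_adjoint U * U) * V"
    unfolding adj using U(1) V(1) Ua Va by (simp add: as)
  also have "\<dots> = 1\<^sub>m n" unfolding U(2) using V Va by simp
  finally have 1: "mat_adjoint (U * V) * (U * V) = 1\<^sub>m n" .
  have "(U * V) * mat_adjoint (U * V) = U * (V * mat_adjoint V) * mat_adjoint U"
    unfolding adj using U(1) V(1) Ua Va by (simp add: as)
  also have "\<dots> = 1\<^sub>m n" unfolding V(3) using U Ua by simp
  finally have 2: "(U * V) * mat_adjoint (U * V) = 1\<^sub>m n" .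
  show ?thesis unfolding unitary_def using 1 2 U V by simp
qed

lemma unitary_adj: assumes "unitary U n" shows "unitary (mat_adjoint U) n"
  using assms unfolding unitary_def by auto

lemma normal_step:
  assumes A: "A \<in> carrier_mat (Suc m) (Suc m)" and N: "normal_mat A"
  and IH: "\<And>B. B \<in> carrier_mat m m \<Longrightarrow> normal_mat B \<Longrightarrow> \<exists>U d. unitary U m \<and> B = U * diagm m d * mat_adjoint U"
  shows "\<exists>U d. unitary U (Suc m) \<and> A = U * diagm (Suc m) d * mat_adjoint U"
proof -
  define n where "n = Suc m"
  have An: "A \<in> carrier_mat n n" using A unfolding n_def .
  have dA: "dim_row A = n" "dim_col A = n" using An by auto
  note as = assoc_mult_mat[of _ n n _ n _ n]
  obtain as where cp: "char_poly A = (\<Prod>a\<leftarrow>as. [:- a, 1:])" and las: "length as = n"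
    using char_poly_factorized[OF An] by blast
  obtain e rest where asr: "as = e # rest" using las unfolding n_def by (cases as) auto
  have "poly (char_poly A) e = 0" unfolding cp asr by simp
  hence ev: "eigenvalue A e" using eigenvalue_root_char_poly[OF An] by simp
  define v where "v = find_eigenvector A e"
  have "eigenvector A v e" unfolding v_def by (rule find_eigenvector[OF An ev])
  hence v: "v \<in> carrier_vec n" and v0: "v \<noteq> 0\<^sub>v n" and Av: "A *\<^sub>v v = e \<cdot>\<^sub>v v"
    unfolding eigenvector_def using dA by auto
  obtain W c where W: "unitary W n" and W0: "\<And>k. k < n \<Longrightarrow> W $$ (k,0) = c * v $ k"
    using exists_unitary_first_col[OF v v0] by blast
  have Wc: "W \<in> carrier_mat n n" and WW: "mat_adjoint W * W = 1\<^sub>m n" and WW': "W * mat_adjoint W = 1\<^sub>m n"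
    using W unfolding unitary_def by auto
  have Wa: "mat_adjoint W \<in> carrier_mat n n" using Wc by simp
  have n0: "0 < n" unfolding n_def by simp
  have AW0: "(A * W) $$ (k,0) = e * W $$ (k,0)" if k: "k < n" for k
  proof -
    have "(A * W) $$ (k,0) = (\<Sum>l\<in>{0..<n}. A $$ (k,l) * W $$ (l,0))"
      using k n0 dA Wc by (simp add: scalar_prod_def)
    also have "\<dots> = c * (\<Sum>l\<in>{0..<n}. A $$ (k,l) * v $ l)"
      unfolding sum_distrib_left by (intro sum.cong refl) (simp add: W0 algebra_simps)
    also have "(\<Sum>l\<in>{0..<n}. A $$ (k,l) * v $ l) = (A *\<^sub>v v) $ k"
      using k dA v by (simp add: scalar_prod_def)
    also have "\<dots> = e * v $ k" unfolding Av using k v by simp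
    finally show ?thesis using W0[OF k] by simp
  qed
  define V where "V = mat_adjoint W"
  have V: "unitary V n" unfolding V_def by (rule unitary_adj[OF W])
  have Vc: "V \<in> carrier_mat n n" unfolding V_def using Wa .
  have VW: "mat_adjoint V = W" unfolding V_def by simp
  define A' where "A' = V * A * mat_adjoint V"
  have A'c: "A' \<in> carrier_mat n n" unfolding A'_def VW using Vc An Wc by simp
  have dA': "dim_row A' = n" "dim_col A' = n" using A'c by auto
  have col0: "A' $$ (i,0) = (if i = 0 then e else 0)" if i: "i < n" for i
  proof -
    have "A' = mat_adjoint W * (A * W)" unfolding A'_def VW V_def using Wa An Wc by (simp add: as)
    hence "A' $$ (i,0) = (\<Sum>k\<in>{0..<n}. cnj (W $$ (k,i)) * (A * W) $$ (k,0))"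
      using i n0 Wc dA by (simp add: scalar_prod_def)
    also have "\<dots> = e * (\<Sum>k\<in>{0..<n}. cnj (W $$ (k,i)) * W $$ (k,0))"
      unfolding sum_distrib_left by (intro sum.cong refl) (simp add: AW0 algebra_simps)
    also have "(\<Sum>k\<in>{0..<n}. cnj (W $$ (k,i)) * W $$ (k,0)) = (mat_adjoint W * W) $$ (i,0)"
      using i n0 Wc by (simp add: scalar_prod_def)
    also have "\<dots> = (if i = 0 then 1 else 0)" unfolding WW using i n0 by simp
    finally show ?thesis by simp
  qed
  have adjA': "mat_adjoint A' = V * mat_adjoint A * mat_adjoint V"
    unfolding A'_def by (rule unitary_conj_adj[OF V An])
  have NA': "A' * mat_adjoint A' = mat_adjoint A' * A'"
  proof -
    have "A' * mat_adjoint A' = (V * A * mat_adjoint V) * (V * mat_adjoint A * mat_adjoint V)"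
      unfolding adjA' by (simp only: A'_def)
    also have "\<dots> = V * (A * mat_adjoint A) * mat_adjoint V"
      by (rule unitary_conj_mult[OF V An]) (use An in simp)
    also have "A * mat_adjoint A = mat_adjoint A * A" using N unfolding normal_mat_def .
    also have "V * (mat_adjoint A * A) * mat_adjoint V = (V * mat_adjoint A * mat_adjoint V) * (V * A * mat_adjoint V)"
      by (rule unitary_conj_mult[OF V, symmetric]) (use An in simp_all)
    also have "\<dots> = mat_adjoint A' * A'"
      unfolding adjA' by (simp only: A'_def)
    finally show ?thesis .
  qed
  have row0: "A' $$ (0, Suc k) = 0" if k: "k < m" for k
  proof -
    have "(A' * mat_adjoint A') $$ (0,0) = (\<Sum>j\<in>{0..<n}. A' $$ (0,j) * cnj (A' $$ (0,j)))"
      using n0 dA' by (simp add: scalar_prod_def)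
    also have "\<dots> = complex_of_real (\<Sum>j<n. (cmod (A' $$ (0,j)))\<^sup>2)"
      by (simp only: complex_norm_square of_real_sum atLeast0LessThan)
    finally have L: "(A' * mat_adjoint A') $$ (0,0) = complex_of_real (\<Sum>j<n. (cmod (A' $$ (0,j)))\<^sup>2)" .
    have "(mat_adjoint A' * A') $$ (0,0) = (\<Sum>j\<in>{0..<n}. cnj (A' $$ (j,0)) * A' $$ (j,0))"
      using n0 dA' by (simp add: scalar_prod_def)
    also have "\<dots> = (\<Sum>j\<in>{0..<n}. if j = 0 then cnj e * e else 0)"
      by (intro sum.cong refl) (simp add: col0)
    also have "\<dots> = cnj e * e" using n0 by simp
    also have "\<dots> = complex_of_real ((cmod e)\<^sup>2)" by (subst complex_norm_square) (rule mult.commute)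
    finally have R: "(mat_adjoint A' * A') $$ (0,0) = complex_of_real ((cmod e)\<^sup>2)" .
    have "complex_of_real (\<Sum>j<n. (cmod (A' $$ (0,j)))\<^sup>2) = complex_of_real ((cmod e)\<^sup>2)"
      using L R NA' by metis
    hence "(\<Sum>j<n. (cmod (A' $$ (0,j)))\<^sup>2) = (cmod e)\<^sup>2" by (simp only: of_real_eq_iff)
    moreover have "(\<Sum>j<n. (cmod (A' $$ (0,j)))\<^sup>2) = (cmod (A' $$ (0,0)))\<^sup>2 + (\<Sum>j<m. (cmod (A' $$ (0,Suc j)))\<^sup>2)"
      unfolding n_def by (simp only: sum.lessThan_Suc_shift)
    moreover have "A' $$ (0,0) = e" using col0[of 0] n0 by simp
    ultimately have S: "(\<Sum>j<m. (cmod (A' $$ (0,Suc j)))\<^sup>2) = 0" by simp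
    have "(cmod (A' $$ (0,Suc k)))\<^sup>2 = 0"
      using S k by (subst (asm) sum_nonneg_eq_0_iff) auto
    thus ?thesis by simp
  qed
  define A3 where "A3 = mat m m (\<lambda>(i,j). A' $$ (Suc i, Suc j))"
  have A3c: "A3 \<in> carrier_mat m m" unfolding A3_def by simp
  have A'ext: "A' = extd e A3"
  proof (rule eq_matI)
    fix i j assume "i < dim_row (extd e A3)" "j < dim_col (extd e A3)"
    hence i: "i < Suc m" and j: "j < Suc m" using A3c by auto
    show "A' $$ (i,j) = extd e A3 $$ (i,j)"
    proof (cases i)
      case 0 thus ?thesis using j col0[of 0] row0 A3c n0 by (cases j) auto
    next
      case (Suc i')
      thus ?thesis using i j col0[of i] A3c unfolding n_def A3_def by (cases j) auto
    qed
  qed (use dA' A3c n_def in auto)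
  have A3a: "mat_adjoint A3 \<in> carrier_mat m m" using A3c by simp
  have "extd (e * cnj e) (A3 * mat_adjoint A3) = extd (cnj e * e) (mat_adjoint A3 * A3)"
    using NA' unfolding A'ext extd_adj extd_mult[OF A3c A3a] extd_mult[OF A3a A3c] .
  hence NA3: "normal_mat A3" unfolding normal_mat_def
    by (rule extd_inj[where m=m]) (use A3c A3a in simp_all)
  obtain U3 d3 where U3: "unitary U3 m" and A3U: "A3 = U3 * diagm m d3 * mat_adjoint U3"
    using IH[OF A3c NA3] by blast
  have U3c: "U3 \<in> carrier_mat m m" and U3U: "mat_adjoint U3 * U3 = 1\<^sub>m m" and U3U': "U3 * mat_adjoint U3 = 1\<^sub>m m"
    using U3 unfolding unitary_def by auto
  have U3a: "mat_adjoint U3 \<in> carrier_mat m m" using U3c by simp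
  define E where "E = extd 1 U3"
  have Ec: "E \<in> carrier_mat n n" unfolding E_def n_def using U3c by simp
  have E: "unitary E n" unfolding unitary_def E_def extd_adj n_def
    using extd_mult[OF U3a U3c, of 1 1] extd_mult[OF U3c U3a, of 1 1] U3U U3U' U3c
    by (simp add: extd_one)
  define d where "d = (\<lambda>i. if i = 0 then e else d3 (i - 1))"
  have A'E: "A' = E * diagm n d * mat_adjoint E"
  proof -
    have "E * diagm n d * mat_adjoint E = extd 1 U3 * extd e (diagm m d3) * extd 1 (mat_adjoint U3)"
      unfolding E_def extd_adj d_def n_def extd_diagm by simp
    also have "\<dots> = extd e (U3 * diagm m d3 * mat_adjoint U3)"
      using extd_mult[OF U3c diagm_carrier, of 1 e d3] extd_mult[OF _ U3a, of "U3 * diagm m d3" e 1] U3c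
      by simp
    finally show ?thesis unfolding A'ext A3U ..
  qed
  have AV: "A = W * A' * mat_adjoint W"
  proof -
    have "W * A' * mat_adjoint W = (W * mat_adjoint W) * A * (W * mat_adjoint W)"
      unfolding A'_def V_def using Wc Wa An by (simp add: as)
    thus ?thesis using WW' An by simp
  qed
  have "A = W * (E * diagm n d * mat_adjoint E) * mat_adjoint W" using AV A'E by simp
  also have "\<dots> = (W * E) * diagm n d * mat_adjoint (W * E)"
    using adj_mult[of W n n E n] Wc Ec Wa by (simp add: as)
  finally have "A = (W * E) * diagm n d * mat_adjoint (W * E)" .
  moreover have "unitary (W * E) n" by (rule unitary_mult[OF W E])
  ultimately show ?thesis unfolding n_def by blast
qed

lemma normal_unitary_diag: "A \<in> carrier_mat n n \<Longrightarrow> normal_mat A \<Longrightarrow> \<exists>U d. unitary U n \<and> A = U * diagm n d * mat_adjoint U"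
proof (induction n arbitrary: A)
  case 0
  have "A = 1\<^sub>m 0 * diagm 0 (\<lambda>_. 0) * mat_adjoint (1\<^sub>m 0)"
    by (rule eq_matI) (use 0 in auto)
  thus ?case using unitary_one by blast
next
  case (Suc m)
  show ?case by (rule normal_step[OF Suc.prems]) (rule Suc.IH)
qed



lemma main_ineq: assumes n: "2 \<le> n" and q: "0 \<le> q" and A: "A \<in> carrier_mat n n" and B: "B \<in> carrier_mat n n"
  and N: "normal_mat A"
  shows "(frob_norm (A * B - complex_of_real q \<cdot>\<^sub>m (B * A)))\<^sup>2 \<le> (1 + q\<^sup>2) * (kyfan22_norm A)\<^sup>2 * (frob_norm B)\<^sup>2"
proof -
  obtain U d where U: "unitary U n" and AU: "A = U * diagm n d * mat_adjoint U"
    using normal_unitary_diag[OF A N] by blast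
  have Uc: "U \<in> carrier_mat n n" and UU: "mat_adjoint U * U = 1\<^sub>m n" and UU': "U * mat_adjoint U = 1\<^sub>m n"
    using U unfolding unitary_def by auto
  have Ua: "mat_adjoint U \<in> carrier_mat n n" using Uc by simp
  note as = assoc_mult_mat[of _ n n _ n _ n]
  define D where "D = diagm n d"
  have Dc: "D \<in> carrier_mat n n" unfolding D_def by simp
  define xs where "xs = map (\<lambda>i. (cmod (d i))\<^sup>2) [0..<n]"
  define K where "K = rev (sort xs) ! 0 + rev (sort xs) ! 1"
  have kf: "(kyfan22_norm A)\<^sup>2 = K" unfolding K_def xs_def by (rule kyfan_diag[OF U n AU])
  define C where "C = mat_adjoint U * B * U"
  have Cc: "C \<in> carrier_mat n n" unfolding C_def using Ua B Uc by simp
  have BC: "B = U * C * mat_adjoint U"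
  proof -
    have "U * C * mat_adjoint U = (U * mat_adjoint U) * B * (U * mat_adjoint U)"
      unfolding C_def using Uc Ua B by (simp add: as)
    thus ?thesis using UU' B by simp
  qed
  have AB: "A * B = U * (D * C) * mat_adjoint U"
    unfolding AU BC D_def by (rule unitary_conj_mult[OF U diagm_carrier Cc])
  have BA: "B * A = U * (C * D) * mat_adjoint U"
    unfolding AU BC D_def by (rule unitary_conj_mult[OF U Cc diagm_carrier])
  define M where "M = D * C - complex_of_real q \<cdot>\<^sub>m (C * D)"
  have Mc: "M \<in> carrier_mat n n" unfolding M_def using Dc Cc by (simp add: minus_carrier_mat)
  have "A * B - complex_of_real q \<cdot>\<^sub>m (B * A) = U * M * mat_adjoint U"
    unfolding AB BA M_def by (rule conj_lin) (use Uc Dc Cc in auto)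
  hence fM: "frob_norm (A * B - complex_of_real q \<cdot>\<^sub>m (B * A)) = frob_norm M"
    using frob_unitary[OF U Mc] by simp
  have fB: "frob_norm B = frob_norm C" unfolding BC by (rule frob_unitary[OF U Cc])
  have Mij: "M $$ (i,j) = (d i - complex_of_real q * d j) * C $$ (i,j)" if "i < n" "j < n" for i j
  proof -
    have "(D * C) $$ (i,j) = d i * C $$ (i,j)" unfolding D_def by (rule diagm_mult_left[OF Cc that])
    moreover have "(C * D) $$ (i,j) = C $$ (i,j) * d j" unfolding D_def by (rule diagm_mult_right[OF Cc that])
    ultimately show ?thesis unfolding M_def using that Cc Dc by (simp add: algebra_simps)
  qed
  have xsi: "xs ! i = (cmod (d i))\<^sup>2" if "i < n" for i using that unfolding xs_def by simp
  have lxs: "length xs = n" unfolding xs_def by simp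
  have bnd: "(cmod (d i - complex_of_real q * d j))\<^sup>2 \<le> (1 + q\<^sup>2) * K" if ij: "i < n" "j < n" for i j
  proof (cases "i = j")
    case False
    have "(cmod (d i - complex_of_real q * d j))\<^sup>2 \<le> (1 + q\<^sup>2) * ((cmod (d i))\<^sup>2 + (cmod (d j))\<^sup>2)"
      by (rule scalar_bound[OF q])
    also have "(cmod (d i))\<^sup>2 + (cmod (d j))\<^sup>2 \<le> K"
      using top2_upper[of i xs j] ij False lxs xsi unfolding K_def by simp
    finally show ?thesis by (simp add: mult_left_mono)
  next
    case True
    define k where "k = (if i = 0 then 1 else (0::nat))"
    have k: "k < n" "k \<noteq> i" unfolding k_def using n by auto
    have "(cmod (d i - complex_of_real q * d j))\<^sup>2 \<le> (1 + q\<^sup>2) * (cmod (d i))\<^sup>2"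
      unfolding True by (rule scalar_bound_diag[OF q])
    also have "(cmod (d i))\<^sup>2 \<le> K"
    proof -
      have "(cmod (d i))\<^sup>2 + (cmod (d k))\<^sup>2 \<le> K"
        using top2_upper[of i xs k] ij k lxs xsi unfolding K_def by simp
      moreover have "0 \<le> (cmod (d k))\<^sup>2" by simp
      ultimately show ?thesis by linarith
    qed
    finally show ?thesis by (simp add: mult_left_mono)
  qed
  have "(frob_norm M)\<^sup>2 = (\<Sum>i<n. \<Sum>j<n. (cmod (M $$ (i,j)))\<^sup>2)"
    using frob_sq[of M] Mc by simp
  also have "\<dots> = (\<Sum>i<n. \<Sum>j<n. (cmod (d i - complex_of_real q * d j))\<^sup>2 * (cmod (C $$ (i,j)))\<^sup>2)"
    by (intro sum.cong refl) (simp add: Mij norm_mult power_mult_distrib)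
  also have "\<dots> \<le> (\<Sum>i<n. \<Sum>j<n. (1 + q\<^sup>2) * K * (cmod (C $$ (i,j)))\<^sup>2)"
    by (intro sum_mono mult_right_mono bnd) auto
  also have "\<dots> = (1 + q\<^sup>2) * K * (\<Sum>i<n. \<Sum>j<n. (cmod (C $$ (i,j)))\<^sup>2)"
    by (simp add: sum_distrib_left)
  also have "(\<Sum>i<n. \<Sum>j<n. (cmod (C $$ (i,j)))\<^sup>2) = (frob_norm C)\<^sup>2"
    using frob_sq[of C] Cc by simp
  finally show ?thesis using fM fB kf by simp
qed



theorem proposition1:
  fixes n :: nat and q :: real
  assumes "n \<ge> 2" and "q \<ge> 0"
  shows "(\<forall>A B. A \<in> carrier_mat n n \<longrightarrow> B \<in> carrier_mat n n \<longrightarrow> normal_mat A \<longrightarrow>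
            (frob_norm (A * B - complex_of_real q \<cdot>\<^sub>m (B * A)))\<^sup>2
              \<le> (1 + q\<^sup>2) * (kyfan22_norm A)\<^sup>2 * (frob_norm B)\<^sup>2)
       \<and> (let A0 = mat n n (\<lambda>(i, j). if i = 0 \<and> j = 0 then 1
                                       else if i = 1 \<and> j = 1 then - complex_of_real q else 0);
              B0 = mat n n (\<lambda>(i, j). if i = 0 \<and> j = 1 then 1 else 0)
          in (frob_norm (A0 * B0 - complex_of_real q \<cdot>\<^sub>m (B0 * A0)))\<^sup>2
              = (1 + q\<^sup>2) * (kyfan22_norm A0)\<^sup>2 * (frob_norm B0)\<^sup>2)"
  using main_ineq[OF assms] equality_case[OF assms] by blast

end
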